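(* If $G$ is a finite graph that does not contain $K_{t,t}$ as a subgraph, then \[\deg(G)/(2t^2)<\mathrm{fw}_1(G)\le(\deg(G)+1)^t.\] Consequently, if $\mathcal C$ is a weakly sparse class of graphs, then $\sup_{G\in\mathcal C}\mathrm{fw}_1(G)<\infty$ if and only if $\mathcal C$ has bounded degeneracy.
   Context: Graphs are finite, simple, undirected. $\deg(G)$ (degeneracy) is the least $d$ such that some total order of $V(G)$ has every vertex with at most $d$ earlier neighbours. A class is weakly sparse if there is $t$ such that no graph in it contains $K_{t,t}$ as a subgraph. A $k$-flip of $G$ is obtained by choosing a partition $\mathcal P$ of $V(G)$ with at most $k$ parts and, for some pairs $A,B$ of (possibly equal) parts, inverting adjacency of every pair of distinct $x\in A,y\in B$. Flipper game of radius $1$ and width $k$: $G_0=G$, runner chooses $v_0$; in round $i\ge1$ the flipper announces a $k$-flip $G_i$ of $G$, the runner moves from $v_{i-1}$ to $v_i$ equal or adjacent to $v_{i-1}$ in $G_{i-1}$; the flipper wins if $v_i$ is isolated in $G_i$. $\mathrm{fw}_1(G)$ is the least $k$ for which the flipper has a winning strategy. *)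

theory Defs
  imports Complex_Main "HOL-Library.Disjoint_Sets"
begin

type_synonym 'a graph = "'a set \<times> ('a \<Rightarrow> 'a \<Rightarrow> bool)"

definition fin_graph :: "'a graph \<Rightarrow> bool" where
  "fin_graph G \<longleftrightarrow> finite (fst G)
     \<and> (\<forall>x y. snd G x y \<longrightarrow> x \<in> fst G \<and> y \<in> fst G \<and> x \<noteq> y)
     \<and> (\<forall>x y. snd G x y \<longrightarrow> snd G y x)"

text \<open>Degeneracy: least d such that some total order (given by an injection into nat)
  has every vertex with at most d earlier neighbours.\<close>
definition degeneracy :: "'a graph \<Rightarrow> nat" where
  "degeneracy G = (LEAST d. \<exists>f :: 'a \<Rightarrow> nat. inj_on f (fst G) \<and>
      (\<forall>v \<in> fst G. card {u \<in> fst G. snd G u v \<and> f u < f v} \<le> d))"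

definition contains_Ktt :: "'a graph \<Rightarrow> nat \<Rightarrow> bool" where
  "contains_Ktt G t \<longleftrightarrow> (\<exists>A B. A \<subseteq> fst G \<and> B \<subseteq> fst G \<and> A \<inter> B = {} \<and>
      card A = t \<and> card B = t \<and> (\<forall>a \<in> A. \<forall>b \<in> B. snd G a b))"

definition weakly_sparse :: "'a graph set \<Rightarrow> bool" where
  "weakly_sparse C \<longleftrightarrow> (\<exists>t. \<forall>G \<in> C. \<not> contains_Ktt G t)"

definition is_flip :: "nat \<Rightarrow> 'a graph \<Rightarrow> 'a graph \<Rightarrow> bool" where
  "is_flip k G H \<longleftrightarrow> (\<exists>P F. partition_on (fst G) P \<and> card P \<le> k \<and>
      F \<subseteq> P \<times> P \<and> (\<forall>A B. (A, B) \<in> F \<longrightarrow> (B, A) \<in> F) \<and>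
      fst H = fst G \<and>
      (\<forall>x y. snd H x y \<longleftrightarrow> (x \<in> fst G \<and> y \<in> fst G \<and> x \<noteq> y \<and>
          (snd G x y \<noteq> (\<exists>A B. (A, B) \<in> F \<and> x \<in> A \<and> y \<in> B)))))"

definition isolated :: "'a graph \<Rightarrow> 'a \<Rightarrow> bool" where
  "isolated H v \<longleftrightarrow> (\<forall>u. \<not> snd H v u)"

text \<open>Flipper wins (in finitely many rounds) the radius-1 width-k game on G from the
  position where the current graph is H and the runner is at v (the runner moves next
  along edges of H, after the flipper announces the next flip).\<close>
inductive flipper_wins :: "'a graph \<Rightarrow> nat \<Rightarrow> 'a graph \<Rightarrow> 'a \<Rightarrow> bool"
  for G :: "'a graph" and k :: nat where
  step: "\<lbrakk> is_flip k G H';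
           \<forall>v'. (v' = v \<or> snd H v v') \<longrightarrow> isolated H' v' \<or> flipper_wins G k H' v' \<rbrakk>
         \<Longrightarrow> flipper_wins G k H v"

definition flipper_has_winning_strategy :: "'a graph \<Rightarrow> nat \<Rightarrow> bool" where
  "flipper_has_winning_strategy G k \<longleftrightarrow> (\<forall>v0 \<in> fst G. flipper_wins G k G v0)"

definition fw1 :: "'a graph \<Rightarrow> nat" where
  "fw1 G = (LEAST k. flipper_has_winning_strategy G k)"

end

theory Submission
  imports Defs
begin


fun Bf :: "nat \<Rightarrow> nat \<Rightarrow> nat \<Rightarrow> nat" where
  "Bf s 0 m = m"
| "Bf 0 (Suc t) m = 1"
| "Bf (Suc s) (Suc t) m = Bf s (Suc t) m + Bf s t m"

lemma fam_bound:
  assumes "finite X"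
  shows "\<And>\<T> t. \<T> \<subseteq> Pow X \<Longrightarrow> (\<forall>S\<subseteq>X. card S = t \<longrightarrow> card {T\<in>\<T>. S \<subseteq> T} \<le> m)
     \<Longrightarrow> card \<T> \<le> Bf (card X) t m"
  using assms
proof (induction X rule: finite_induct)
  case empty
  show ?case
  proof (cases t)
    case 0
    with empty(2)[rule_format, of "{}"] show ?thesis by simp
  next
    case (Suc t')
    have "\<T> \<subseteq> {{}}" using empty by auto
    hence "card \<T> \<le> card {{}::'a set}" by (intro card_mono) auto
    hence "card \<T> \<le> 1" by simp
    thus ?thesis using Suc by simp
  qed
next
  case (insert x X)
  have finT: "finite \<T>" by (rule finite_subset[OF insert(4)]) (simp add: insert(1))
  show ?case
  proof (cases t)
    case 0
    with insert(5)[rule_format, of "{}"] show ?thesis by simp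
  next
    case (Suc t')
    define T0 where "T0 = {T\<in>\<T>. x \<notin> T}"
    define T1 where "T1 = {T\<in>\<T>. x \<in> T}"
    have inj: "inj_on (\<lambda>T. T - {x}) T1" unfolding T1_def inj_on_def by blast
    have c1: "card \<T> = card T0 + card T1"
    proof -
      have "\<T> = T0 \<union> T1" "T0 \<inter> T1 = {}" unfolding T0_def T1_def by auto
      moreover have "finite T0" "finite T1" using finT unfolding T0_def T1_def by auto
      ultimately show ?thesis by (simp add: card_Un_disjoint)
    qed
    have b0: "card T0 \<le> Bf (card X) t m"
    proof (rule insert.IH)
      show "T0 \<subseteq> Pow X" using insert(4) unfolding T0_def by auto
      show "\<forall>S\<subseteq>X. card S = t \<longrightarrow> card {T \<in> T0. S \<subseteq> T} \<le> m"
      proof (intro allI impI)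
        fix S assume S: "S \<subseteq> X" "card S = t"
        have "card {T \<in> T0. S \<subseteq> T} \<le> card {T\<in>\<T>. S \<subseteq> T}"
          by (rule card_mono) (use finT T0_def in auto)
        also have "\<dots> \<le> m" using insert(5)[rule_format, of S] S by blast
        finally show "card {T \<in> T0. S \<subseteq> T} \<le> m" .
      qed
    qed
    have b1: "card ((\<lambda>T. T - {x}) ` T1) \<le> Bf (card X) t' m"
    proof (rule insert.IH)
      show "(\<lambda>T. T - {x}) ` T1 \<subseteq> Pow X" using insert(4) unfolding T1_def by auto
      show "\<forall>S\<subseteq>X. card S = t' \<longrightarrow> card {T \<in> (\<lambda>T. T - {x}) ` T1. S \<subseteq> T} \<le> m"
      proof (intro allI impI)
        fix S assume S: "S \<subseteq> X" "card S = t'"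
        have xS: "x \<notin> S" using S insert(2) by auto
        have fS: "finite S" using S insert(1) finite_subset by auto
        have "{T \<in> (\<lambda>T. T - {x}) ` T1. S \<subseteq> T} = (\<lambda>T. T - {x}) ` {T\<in>T1. insert x S \<subseteq> T}"
          using xS unfolding T1_def by auto
        hence "card {T \<in> (\<lambda>T. T - {x}) ` T1. S \<subseteq> T} = card {T\<in>T1. insert x S \<subseteq> T}"
          using inj by (simp add: card_image inj_on_subset)
        also have "\<dots> \<le> card {T\<in>\<T>. insert x S \<subseteq> T}"
          by (rule card_mono) (use finT T1_def in auto)
        also have "\<dots> \<le> m" using insert(5)[rule_format, of "insert x S"] S xS fS Suc by (simp add: subset_insertI2)
        finally show "card {T \<in> (\<lambda>T. T - {x}) ` T1. S \<subseteq> T} \<le> m" .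
      qed
    qed
    have "card T1 = card ((\<lambda>T. T - {x}) ` T1)" using inj by (simp add: card_image)
    hence "card \<T> \<le> Bf (card X) t m + Bf (card X) t' m" using c1 b0 b1 by linarith
    thus ?thesis using Suc insert(1,2) by simp
  qed
qed

lemma Bf_le: "1 \<le> m \<Longrightarrow> Bf s t m \<le> m * (s+1)^t"
proof (induction s t m rule: Bf.induct)
  case (1 s m) then show ?case by simp
next
  case (2 t m) then show ?case by simp
next
  case (3 s t m)
  have "Bf (Suc s) (Suc t) m \<le> m * (s+1)^(Suc t) + m * (s+1)^t" using 3 by simp
  also have "\<dots> = m * (s+1)^t * (s+2)" by (simp add: algebra_simps)
  also have "\<dots> \<le> m * (s+2)^t * (s+2)" by (intro mult_right_mono mult_left_mono power_mono) auto
  finally show ?case by (simp add: algebra_simps)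
qed

lemma bern: "(s+1)^(Suc t) + Suc t * (s+1::nat)^t \<le> (s+2)^(Suc t)"
proof (induction t)
  case 0 then show ?case by simp
next
  case (Suc t)
  have "(s+1)^(Suc (Suc t)) + Suc (Suc t) * (s+1::nat)^(Suc t)
      = (s+1) * ((s+1)^(Suc t) + Suc t * (s+1)^t) + (s+1)^(Suc t)" by (simp add: algebra_simps)
  also have "\<dots> \<le> (s+1) * (s+2)^(Suc t) + (s+2)^(Suc t)"
    using Suc by (intro add_mono mult_left_mono power_mono) auto
  also have "\<dots> = (s+2)^(Suc (Suc t))" by (simp add: algebra_simps)
  finally show ?case .
qed

lemma main_arith: "2 \<le> t \<Longrightarrow> 1 \<le> m \<Longrightarrow> m \<le> t - 1 \<Longrightarrow> s + Bf s t m \<le> (s+1)^t"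
proof (induction s)
  case 0
  then obtain t' where "t = Suc t'" by (cases t) auto
  then show ?case by simp
next
  case (Suc s)
  obtain t' where t: "t = Suc t'" using Suc by (cases t) auto
  have "Suc s + Bf (Suc s) t m = (s + Bf s t m) + 1 + Bf s t' m" using t by simp
  also have "\<dots> \<le> (s+1)^t + 1 + m * (s+1)^t'" using Suc Bf_le by (intro add_mono) auto
  also have "\<dots> \<le> (s+1)^t + 1 * (s+1)^t' + t' * (s+1)^t'"
  proof -
    have "1 \<le> (s+1)^t'" by simp
    moreover have "m * (s+1)^t' \<le> t' * (s+1)^t'" using Suc t by simp
    ultimately show ?thesis by linarith
  qed
  also have "\<dots> = (s+1)^(Suc t') + Suc t' * (s+1)^t'" using t by (simp add: algebra_simps)
  also have "\<dots> \<le> (s+2)^(Suc t')" by (rule bern)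
  also have "\<dots> = (Suc s + 1)^t" using t by (simp only: numeral_2_eq_2 Suc_eq_plus1 add.assoc add_0)
  finally show ?case .
qed



definition vtyp :: "'a set \<Rightarrow> ('a \<Rightarrow> 'a \<Rightarrow> bool) \<Rightarrow> 'a \<Rightarrow> 'a + 'a set" where
  "vtyp X E y = (if y \<in> X then Inl y else Inr {x\<in>X. E y x})"

lemma vtyp_same1: "vtyp X E a = vtyp X E b \<Longrightarrow> a \<in> X \<Longrightarrow> b = a"
  unfolding vtyp_def by (auto split: if_splits)

lemma vtyp_same2: "vtyp X E a = vtyp X E b \<Longrightarrow> a \<notin> X \<Longrightarrow> b \<notin> X \<and> {x\<in>X. E a x} = {x\<in>X. E b x}"
  unfolding vtyp_def by (auto split: if_splits)

lemma flip_isolate: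
  assumes fg: "fin_graph (V,E)" and XV: "X \<subseteq> V"
    and cnt: "card X + card ((\<lambda>y. {x\<in>X. E y x}) ` (V - X)) \<le> k"
  shows "is_flip k (V,E) (V, \<lambda>y z. E y z \<and> y \<notin> X \<and> z \<notin> X)"
proof -
  have finV: "finite V" using fg by (simp add: fin_graph_def)
  have sym: "\<And>x y. E x y \<Longrightarrow> E y x" using fg by (simp add: fin_graph_def)
  have inV: "\<And>x y. E x y \<Longrightarrow> x \<in> V \<and> y \<in> V \<and> x \<noteq> y" using fg by (simp add: fin_graph_def)
  define \<tau> where "\<tau> = vtyp X E"
  define cls where "cls c = {y\<in>V. \<tau> y = c}" for c
  define P where "P = cls ` (\<tau> ` V)"
  have part: "partition_on V P"
    unfolding partition_on_def disjoint_def P_def cls_def by auto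
  have "card P \<le> card (\<tau> ` V)" unfolding P_def using finV by (simp add: card_image_le)
  also have "\<dots> \<le> card (Inl ` X \<union> Inr ` ((\<lambda>y. {x\<in>X. E y x}) ` (V - X)))"
  proof (rule card_mono)
    have "finite X" using XV finV finite_subset by auto
    thus "finite (Inl ` X \<union> Inr ` ((\<lambda>y. {x\<in>X. E y x}) ` (V - X)))" using finV by simp
    show "\<tau> ` V \<subseteq> Inl ` X \<union> Inr ` ((\<lambda>y. {x\<in>X. E y x}) ` (V - X))"
      unfolding \<tau>_def vtyp_def by auto
  qed
  also have "\<dots> \<le> card (Inl ` X :: ('a + 'a set) set) + card (Inr ` ((\<lambda>y. {x\<in>X. E y x}) ` (V - X)) :: ('a + 'a set) set)"
    using card_Un_le by blast
  also have "\<dots> \<le> k" using cnt by (simp add: card_image)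
  finally have cardP: "card P \<le> k" .
  define F where "F = {(A,B). A \<in> P \<and> B \<in> P \<and> (\<exists>y\<in>A. \<exists>z\<in>B. E y z \<and> (y \<in> X \<or> z \<in> X))}"
  have key: "(\<exists>A B. (A,B) \<in> F \<and> y \<in> A \<and> z \<in> B) \<longleftrightarrow> E y z \<and> (y \<in> X \<or> z \<in> X)"
    if yV: "y \<in> V" and zV: "z \<in> V" for y z
  proof
    assume "\<exists>A B. (A,B) \<in> F \<and> y \<in> A \<and> z \<in> B"
    then obtain A B y' z' where AP: "A \<in> P" and BP: "B \<in> P" and yA: "y \<in> A" and zB: "z \<in> B"
      and y'A: "y' \<in> A" and z'B: "z' \<in> B" and e: "E y' z'" and xx: "y' \<in> X \<or> z' \<in> X"
      unfolding F_def by blast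
    have ty: "\<tau> y' = \<tau> y" using AP yA y'A unfolding P_def cls_def by auto
    have tz: "\<tau> z' = \<tau> z" using BP zB z'B unfolding P_def cls_def by auto
    show "E y z \<and> (y \<in> X \<or> z \<in> X)"
    proof (cases "y' \<in> X")
      case True
      hence yy: "y = y'" using vtyp_same1[of X E y' y] ty unfolding \<tau>_def by auto
      show ?thesis
      proof (cases "z' \<in> X")
        case True
        hence "z = z'" using vtyp_same1[of X E z' z] tz unfolding \<tau>_def by auto
        thus ?thesis using e yy xx by auto
      next
        case False
        hence "{x\<in>X. E z' x} = {x\<in>X. E z x}" using vtyp_same2[of X E z' z] tz unfolding \<tau>_def by auto
        moreover have "y \<in> {x\<in>X. E z' x}" using e yy True sym by auto
        ultimately have "E z y" by auto
        thus ?thesis using sym yy True by auto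
      qed
    next
      case False
      hence zX: "z' \<in> X" using xx by auto
      hence zz: "z = z'" using vtyp_same1[of X E z' z] tz unfolding \<tau>_def by auto
      have "{x\<in>X. E y' x} = {x\<in>X. E y x}" using vtyp_same2[of X E y' y] ty False unfolding \<tau>_def by auto
      moreover have "z \<in> {x\<in>X. E y' x}" using e zz zX by auto
      ultimately have "E y z" by auto
      thus ?thesis using zz zX by auto
    qed
  next
    assume a: "E y z \<and> (y \<in> X \<or> z \<in> X)"
    have "(cls (\<tau> y), cls (\<tau> z)) \<in> F" unfolding F_def P_def cls_def using a yV zV by blast
    moreover have "y \<in> cls (\<tau> y)" "z \<in> cls (\<tau> z)" unfolding cls_def using yV zV by auto
    ultimately show "\<exists>A B. (A,B) \<in> F \<and> y \<in> A \<and> z \<in> B" by blast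
  qed
  have symF: "\<forall>A B. (A, B) \<in> F \<longrightarrow> (B, A) \<in> F" unfolding F_def using sym by blast
  have FP: "F \<subseteq> P \<times> P" unfolding F_def by auto
  have adj: "\<forall>x y. (E x y \<and> x \<notin> X \<and> y \<notin> X) \<longleftrightarrow> (x \<in> V \<and> y \<in> V \<and> x \<noteq> y \<and>
          (E x y \<noteq> (\<exists>A B. (A, B) \<in> F \<and> x \<in> A \<and> y \<in> B)))"
  proof (intro allI)
    fix x y
    show "(E x y \<and> x \<notin> X \<and> y \<notin> X) \<longleftrightarrow> (x \<in> V \<and> y \<in> V \<and> x \<noteq> y \<and>
          (E x y \<noteq> (\<exists>A B. (A, B) \<in> F \<and> x \<in> A \<and> y \<in> B)))"
    proof (cases "x \<in> V \<and> y \<in> V")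
      case True
      then show ?thesis using key[of x y] inV by auto
    next
      case False
      then show ?thesis using inV by auto
    qed
  qed
  show ?thesis unfolding is_flip_def
    using part cardP FP symF adj by (intro exI[of _ P] exI[of _ F]) simp
qed

lemma ktt_prop:
  assumes fg: "fin_graph (V,E)" and nk: "\<not> contains_Ktt (V,E) t" and XV: "X \<subseteq> V"
    and SX: "S \<subseteq> X" and cS: "card S = t"
  shows "card {T \<in> (\<lambda>y. {x\<in>X. E y x}) ` (V - X). S \<subseteq> T} \<le> t - 1"
proof (rule ccontr)
  define \<T> where "\<T> = {T \<in> (\<lambda>y. {x\<in>X. E y x}) ` (V - X). S \<subseteq> T}"
  assume "\<not> card {T \<in> (\<lambda>y. {x\<in>X. E y x}) ` (V - X). S \<subseteq> T} \<le> t - 1"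
  hence ct: "t \<le> card \<T>" unfolding \<T>_def by simp
  obtain \<T>' where T'sub: "\<T>' \<subseteq> \<T>" and cT': "card \<T>' = t"
    using obtain_subset_with_card_n[OF ct] by blast
  define g where "g T = (SOME y. y \<in> V - X \<and> {x\<in>X. E y x} = T)" for T
  have g: "g T \<in> V - X \<and> {x\<in>X. E (g T) x} = T" if "T \<in> \<T>'" for T
  proof -
    have "\<exists>y. y \<in> V - X \<and> {x\<in>X. E y x} = T" using that T'sub unfolding \<T>_def by auto
    thus ?thesis unfolding g_def by (rule someI_ex)
  qed
  have inj: "inj_on g \<T>'" unfolding inj_on_def using g by metis
  have c1: "S \<subseteq> V" using SX XV by auto
  have c2: "g ` \<T>' \<subseteq> V" using g by auto
  have c3: "S \<inter> g ` \<T>' = {}" using g SX by auto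
  have c5: "card (g ` \<T>') = t" using inj cT' by (simp add: card_image)
  have c6: "\<forall>a\<in>S. \<forall>b\<in>g ` \<T>'. E a b"
  proof (intro ballI)
    fix a b assume aS: "a \<in> S" and "b \<in> g ` \<T>'"
    then obtain T where T: "T \<in> \<T>'" and b: "b = g T" by auto
    have "S \<subseteq> T" using T T'sub unfolding \<T>_def by auto
    hence "a \<in> {x\<in>X. E b x}" using g[OF T] aS b by auto
    hence "E b a" by simp
    thus "E a b" using fg unfolding fin_graph_def by auto
  qed
  have "contains_Ktt (V,E) t"
    unfolding contains_Ktt_def using c1 c2 c3 cS c5 c6
    by (intro exI[of _ S] exI[of _ "g ` \<T>'"]) simp
  with nk show False by simp
qed

lemma flip_count:
  assumes fg: "fin_graph (V,E)" and nk: "\<not> contains_Ktt (V,E) t" and XV: "X \<subseteq> V"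
    and t2: "2 \<le> t" and cX: "card X \<le> d"
  shows "is_flip ((d+1)^t) (V,E) (V, \<lambda>y z. E y z \<and> y \<notin> X \<and> z \<notin> X)"
proof (rule flip_isolate[OF fg XV])
  have finX: "finite X" using XV fg finite_subset unfolding fin_graph_def by auto
  have "card ((\<lambda>y. {x\<in>X. E y x}) ` (V - X)) \<le> Bf (card X) t (t-1)"
    by (rule fam_bound[OF finX]) (use ktt_prop[OF fg nk XV] in auto)
  hence "card X + card ((\<lambda>y. {x\<in>X. E y x}) ` (V - X)) \<le> (card X + 1)^t"
    using main_arith[of t "t-1" "card X"] t2 by linarith
  also have "\<dots> \<le> (d+1)^t" using cX by (simp add: power_mono)
  finally show "card X + card ((\<lambda>y. {x\<in>X. E y x}) ` (V - X)) \<le> (d+1)^t" .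
qed

lemma flip_empty:
  assumes fg: "fin_graph (V,E)" and k: "1 \<le> k"
  shows "is_flip k (V,E) (V, \<lambda>y z. E y z \<and> y \<notin> {} \<and> z \<notin> {})"
proof (rule flip_isolate[OF fg])
  have "(\<lambda>y. {x\<in>{}. E y x}) ` (V - {}) \<subseteq> {{}}" by auto
  hence "card ((\<lambda>y. {x\<in>{}. E y x}) ` (V - {})) \<le> card {{}::'a set}" by (intro card_mono) auto
  thus "card {} + card ((\<lambda>y. {x\<in>{}. E y x}) ` (V - {})) \<le> k" using k by simp
qed simp



lemma deg_witness:
  assumes "finite V"
  shows "\<exists>f::'a\<Rightarrow>nat. inj_on f V \<and> (\<forall>v\<in>V. card {u\<in>V. E u v \<and> f u < f v} \<le> degeneracy (V,E))"
proof -
  define P where "P d = (\<exists>f::'a\<Rightarrow>nat. inj_on f V \<and> (\<forall>v\<in>V. card {u\<in>V. E u v \<and> f u < f v} \<le> d))" for d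
  obtain f :: "'a \<Rightarrow> nat" and n where "f ` V = {i. i < n}" "inj_on f V"
    using finite_imp_inj_to_nat_seg[OF assms] by blast
  hence "P (card V)" unfolding P_def using assms by (intro exI[of _ f]) (auto intro: card_mono)
  hence "P (LEAST d. P d)" by (rule LeastI)
  moreover have "degeneracy (V,E) = (LEAST d. P d)" unfolding degeneracy_def P_def by simp
  ultimately show ?thesis unfolding P_def by simp
qed

lemma deg_le:
  assumes "inj_on (f::'a\<Rightarrow>nat) V" "\<forall>v\<in>V. card {u\<in>V. E u v \<and> f u < f v} \<le> d"
  shows "degeneracy (V,E) \<le> d"
  unfolding degeneracy_def using assms by (intro Least_le) auto

lemma Ktt0: "contains_Ktt G 0"
  unfolding contains_Ktt_def by (intro exI[of _ "{}"]) auto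

lemma upper_wins:
  assumes fg: "fin_graph (V,E)" and nk: "\<not> contains_Ktt (V,E) t"
  shows "flipper_has_winning_strategy (V,E) ((degeneracy (V,E) + 1)^t)"
proof -
  define d where "d = degeneracy (V,E)"
  have finV: "finite V" using fg by (simp add: fin_graph_def)
  have sym: "\<And>x y. E x y \<Longrightarrow> E y x" using fg by (simp add: fin_graph_def)
  have inV: "\<And>x y. E x y \<Longrightarrow> x \<in> V \<and> y \<in> V \<and> x \<noteq> y" using fg by (simp add: fin_graph_def)
  obtain f :: "'a \<Rightarrow> nat" where inj: "inj_on f V"
    and fd: "\<forall>v\<in>V. card {u\<in>V. E u v \<and> f u < f v} \<le> d"
    using deg_witness[OF finV, of E] unfolding d_def by blast
  have t1: "1 \<le> t" using nk Ktt0[of "(V,E)"] by (cases t) auto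
  show ?thesis
  proof (cases "d = 0")
    case True
    have noE: "\<not> E x y" for x y
    proof
      assume e: "E x y"
      have xy: "x \<in> V" "y \<in> V" "x \<noteq> y" using inV[OF e] by auto
      hence "f x \<noteq> f y" using inj unfolding inj_on_def by auto
      hence "f x < f y \<or> f y < f x" by auto
      thus False
      proof
        assume "f x < f y"
        hence "x \<in> {u\<in>V. E u y \<and> f u < f y}" using e xy by auto
        moreover have "finite {u\<in>V. E u y \<and> f u < f y}" using finV by auto
        ultimately have "card {u\<in>V. E u y \<and> f u < f y} > 0" by (auto simp: card_gt_0_iff)
        thus False using fd xy True by fastforce
      next
        assume "f y < f x"
        hence "y \<in> {u\<in>V. E u x \<and> f u < f x}" using sym[OF e] xy by auto
        moreover have "finite {u\<in>V. E u x \<and> f u < f x}" using finV by auto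
        ultimately have "card {u\<in>V. E u x \<and> f u < f x} > 0" by (auto simp: card_gt_0_iff)
        thus False using fd xy True by fastforce
      qed
    qed
    have k1: "(d+1)^t = 1" using True by simp
    show ?thesis unfolding flipper_has_winning_strategy_def d_def[symmetric] k1
    proof
      fix v0 assume "v0 \<in> fst (V,E)"
      show "flipper_wins (V,E) 1 (V,E) v0"
      proof (rule flipper_wins.step[OF flip_empty[OF fg, of 1]])
        show "\<forall>v'. v' = v0 \<or> snd (V,E) v0 v' \<longrightarrow>
          isolated (V, \<lambda>y z. E y z \<and> y \<notin> {} \<and> z \<notin> {}) v' \<or>
          flipper_wins (V,E) 1 (V, \<lambda>y z. E y z \<and> y \<notin> {} \<and> z \<notin> {}) v'"
          using noE by (simp add: isolated_def)
      qed simp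
    qed
  next
    case False
    hence d1: "1 \<le> d" by simp
    have t2: "2 \<le> t"
    proof (rule ccontr)
      assume "\<not> 2 \<le> t"
      hence t1': "t = 1" using t1 by simp
      have "\<not> E x y" for x y
      proof
        assume e: "E x y"
        have "contains_Ktt (V,E) 1" unfolding contains_Ktt_def
          using inV[OF e] e by (intro exI[of _ "{x}"] exI[of _ "{y}"]) auto
        thus False using nk t1' by simp
      qed
      hence "degeneracy (V,E) \<le> 0" by (intro deg_le[OF inj]) simp
      thus False using False d_def by simp
    qed
    define k where "k = (d+1)^t"
    define L where "L v = {u\<in>V. E u v \<and> f u < f v}" for v
    define M where "M = Suc (Max (f ` V))"
    define ph2 where "ph2 H v = (\<exists>u\<in>L v. \<not> snd H v u)" for H :: "'a graph" and v
    define \<mu> where "\<mu> H v = (if ph2 H v then M - f v else M + 1 + f v)" for H v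
    have fM: "f v < M" if "v \<in> V" for v
      unfolding M_def using finV that by (simp add: le_imp_less_Suc)
    have claim: "\<forall>H v. \<mu> H v = n \<longrightarrow> v \<in> V \<longrightarrow> (\<forall>u. snd H v u \<longrightarrow> E v u) \<longrightarrow> flipper_wins (V,E) k H v"
      for n
    proof (induction n rule: less_induct)
      case (less n)
      show ?case
      proof (intro allI impI)
        fix H v assume mu: "\<mu> H v = n" and vV: "v \<in> V" and inv: "\<forall>u. snd H v u \<longrightarrow> E v u"
        define X where "X = (if ph2 H v then insert v {u\<in>L v. snd H v u} else {v})"
        have vX: "v \<in> X" unfolding X_def by auto
        have XV: "X \<subseteq> V" unfolding X_def L_def using vV by auto
        have cX: "card X \<le> d"
        proof (cases "ph2 H v")
          case True
          have fL: "finite (L v)" unfolding L_def using finV by auto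
          have "{u\<in>L v. snd H v u} \<subset> L v" using True unfolding ph2_def by auto
          hence "card {u\<in>L v. snd H v u} < card (L v)" using fL psubset_card_mono by blast
          moreover have "card (L v) \<le> d" using fd vV unfolding L_def by auto
          moreover have "card X \<le> Suc (card {u\<in>L v. snd H v u})"
            unfolding X_def using True card_insert_le_m1 fL
            by (simp add: card_insert_if)
          ultimately show ?thesis by linarith
        next
          case False
          then show ?thesis unfolding X_def using d1 by simp
        qed
        define H' where "H' = (V, \<lambda>y z. E y z \<and> y \<notin> X \<and> z \<notin> X)"
        have flip: "is_flip k (V,E) H'" unfolding H'_def k_def
          by (rule flip_count[OF fg nk XV t2 cX])
        show "flipper_wins (V,E) k H v"
        proof (rule flipper_wins.step[OF flip], intro allI impI)
          fix v' assume h: "v' = v \<or> snd H v v'"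
          show "isolated H' v' \<or> flipper_wins (V,E) k H' v'"
          proof (cases "v' \<in> X")
            case True
            then show ?thesis unfolding isolated_def H'_def by simp
          next
            case False
            hence vv: "v' \<noteq> v" using vX by auto
            hence hv: "snd H v v'" using h by auto
            hence e: "E v v'" using inv by auto
            have v'V: "v' \<in> V" using inV[OF e] by auto
            have fne: "f v' \<noteq> f v" using inj vv vV v'V unfolding inj_on_def by auto
            have lt: "\<mu> H' v' < \<mu> H v"
            proof (cases "f v < f v'")
              case True
              have "v \<in> L v'" unfolding L_def using vV e True by auto
              moreover have "\<not> snd H' v' v" unfolding H'_def using vX by simp
              ultimately have "ph2 H' v'" unfolding ph2_def by auto
              hence m1: "\<mu> H' v' = M - f v'" unfolding \<mu>_def by simp
              have "f v' < M" using fM v'V by auto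
              then show ?thesis using m1 True unfolding \<mu>_def by auto
            next
              case False
              hence lt': "f v' < f v" using fne by auto
              have "v' \<in> L v" unfolding L_def using v'V sym[OF e] lt' by auto
              hence np: "\<not> ph2 H v" using \<open>v' \<notin> X\<close> hv unfolding X_def by auto
              hence "\<mu> H v = M + 1 + f v" unfolding \<mu>_def by simp
              moreover have "\<mu> H' v' \<le> M + 1 + f v'" unfolding \<mu>_def by auto
              ultimately show ?thesis using lt' by linarith
            qed
            have inv': "\<forall>u. snd H' v' u \<longrightarrow> E v' u" unfolding H'_def by simp
            have "flipper_wins (V,E) k H' v'"
              using less.IH[OF lt[unfolded mu]] v'V inv' by blast
            thus ?thesis by simp
          qed
        qed
      qed
    qed
    show ?thesis unfolding flipper_has_winning_strategy_def d_def[symmetric] k_def[symmetric]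
      using claim by simp
  qed
qed



lemma order_exists:
  assumes "finite W"
  shows "(\<forall>U\<subseteq>W. U \<noteq> {} \<longrightarrow> (\<exists>u\<in>U. card {w\<in>U. E w u} \<le> c)) \<Longrightarrow>
    \<exists>f::'a\<Rightarrow>nat. inj_on f W \<and> (\<forall>v\<in>W. card {u\<in>W. E u v \<and> f u < f v} \<le> c)"
  using assms
proof (induction W rule: finite_psubset_induct)
  case (psubset W)
  show ?case
  proof (cases "W = {}")
    case True
    then show ?thesis by auto
  next
    case False
    then obtain u where uW: "u \<in> W" and cu: "card {w\<in>W. E w u} \<le> c" using psubset.prems by blast
    define W' where "W' = W - {u}"
    have sub: "W' \<subset> W" unfolding W'_def using uW by auto
    have "\<forall>U\<subseteq>W'. U \<noteq> {} \<longrightarrow> (\<exists>u\<in>U. card {w\<in>U. E w u} \<le> c)"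
      using psubset.prems sub by auto
    then obtain f' :: "'a \<Rightarrow> nat" where inj': "inj_on f' W'"
      and f'c: "\<forall>v\<in>W'. card {x\<in>W'. E x v \<and> f' x < f' v} \<le> c"
      using psubset.IH[OF sub] by blast
    have finW': "finite W'" using psubset.hyps W'_def by auto
    define f where "f = f'(u := Suc (Max (f' ` W')))"
    have big: "f' v < f u" if "v \<in> W'" for v
      unfolding f_def using finW' that by (simp add: le_imp_less_Suc)
    have fv: "f v = f' v" if "v \<in> W'" for v unfolding f_def using that W'_def by auto
    have inj: "inj_on f W"
    proof (rule inj_onI)
      fix x y assume x: "x \<in> W" and y: "y \<in> W" and e: "f x = f y"
      show "x = y"
      proof (cases "x = u"; cases "y = u")
        assume "x = u" "y \<noteq> u"
        hence "y \<in> W'" using y W'_def by auto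
        thus ?thesis using big fv e \<open>x = u\<close> by force
      next
        assume "x \<noteq> u" "y = u"
        hence "x \<in> W'" using x W'_def by auto
        thus ?thesis using big fv e \<open>y = u\<close> by force
      next
        assume "x \<noteq> u" "y \<noteq> u"
        hence "x \<in> W'" "y \<in> W'" using x y W'_def by auto
        thus ?thesis using inj' e fv unfolding inj_on_def by auto
      qed simp
    qed
    have "\<forall>v\<in>W. card {x\<in>W. E x v \<and> f x < f v} \<le> c"
    proof
      fix v assume vW: "v \<in> W"
      show "card {x\<in>W. E x v \<and> f x < f v} \<le> c"
      proof (cases "v = u")
        case True
        have "card {x\<in>W. E x v \<and> f x < f v} \<le> card {w\<in>W. E w u}"
          using psubset.hyps True by (intro card_mono) auto
        thus ?thesis using cu by simp
      next
        case False
        hence vW': "v \<in> W'" using vW W'_def by auto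
        have "{x\<in>W. E x v \<and> f x < f v} = {x\<in>W'. E x v \<and> f' x < f' v}"
        proof (intro set_eqI iffI)
          fix x assume "x \<in> {x\<in>W. E x v \<and> f x < f v}"
          moreover have "x \<noteq> u" using calculation big[OF vW'] fv[OF vW'] by auto
          ultimately show "x \<in> {x\<in>W'. E x v \<and> f' x < f' v}" using fv vW' W'_def by auto
        next
          fix x assume "x \<in> {x\<in>W'. E x v \<and> f' x < f' v}"
          thus "x \<in> {x\<in>W. E x v \<and> f x < f v}" using fv vW' W'_def by auto
        qed
        thus ?thesis using f'c vW' by simp
      qed
    qed
    thus ?thesis using inj by blast
  qed
qed

lemma min_deg_sub:
  assumes fg: "fin_graph (V,E)" and D1: "1 \<le> degeneracy (V,E)"
  shows "\<exists>U. U \<subseteq> V \<and> U \<noteq> {} \<and> (\<forall>u\<in>U. degeneracy (V,E) \<le> card {w\<in>U. E u w})"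
proof (rule ccontr)
  define D where "D = degeneracy (V,E)"
  assume "\<not> ?thesis"
  hence h: "\<forall>U\<subseteq>V. U \<noteq> {} \<longrightarrow> (\<exists>u\<in>U. card {w\<in>U. E w u} \<le> D - 1)"
    unfolding D_def
  proof (intro allI impI)
    fix U assume n: "\<not> (\<exists>U. U \<subseteq> V \<and> U \<noteq> {} \<and> (\<forall>u\<in>U. degeneracy (V,E) \<le> card {w\<in>U. E u w}))"
      and U: "U \<subseteq> V" "U \<noteq> {}"
    then obtain u where u: "u \<in> U" "card {w\<in>U. E u w} < degeneracy (V,E)" by (meson not_le)
    have "{w\<in>U. E w u} = {w\<in>U. E u w}" using fg unfolding fin_graph_def by auto
    hence "card {w\<in>U. E w u} \<le> degeneracy (V,E) - 1" using u by simp
    thus "\<exists>u\<in>U. card {w\<in>U. E w u} \<le> degeneracy (V,E) - 1" using u by blast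
  qed
  have finV: "finite V" using fg by (simp add: fin_graph_def)
  obtain f :: "'a \<Rightarrow> nat" where "inj_on f V" "\<forall>v\<in>V. card {u\<in>V. E u v \<and> f u < f v} \<le> D - 1"
    using order_exists[OF finV h] by blast
  hence "degeneracy (V,E) \<le> D - 1" by (rule deg_le)
  thus False using D1 D_def by simp
qed

lemma part_eq: "partition_on V P \<Longrightarrow> A \<in> P \<Longrightarrow> Q \<in> P \<Longrightarrow> a \<in> A \<Longrightarrow> a \<in> Q \<Longrightarrow> A = Q"
  using partition_onD2 disjointD by fastforce

lemma runner_step:
  assumes fg: "fin_graph (V,E)" and nk: "\<not> contains_Ktt (V,E) t"
    and flip: "is_flip k (V,E) H'" and UV: "U \<subseteq> V"
    and Udeg: "\<forall>u\<in>U. D \<le> card {w\<in>U. E u w}"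
    and AU: "A \<subseteq> U" and mA: "m \<le> card A" and m: "m = (t-1)*k + 1"
    and Dbig: "t*t*k + 2*t \<le> D + k" and t1: "1 \<le> t"
  shows "\<exists>a\<in>A. m \<le> card {w\<in>U. snd H' a w}"
proof (rule ccontr)
  assume "\<not> ?thesis"
  hence bad: "card {w\<in>U. snd H' a w} < m" if "a \<in> A" for a using that by auto
  have finV: "finite V" using fg by (simp add: fin_graph_def)
  have inV: "\<And>x y. E x y \<Longrightarrow> x \<in> V \<and> y \<in> V \<and> x \<noteq> y" using fg by (simp add: fin_graph_def)
  have finU: "finite U" using UV finV finite_subset by auto
  obtain P F where part: "partition_on V P" and cP: "card P \<le> k" and FP: "F \<subseteq> P \<times> P"
    and adj: "\<forall>x y. snd H' x y \<longleftrightarrow> (x \<in> V \<and> y \<in> V \<and> x \<noteq> y \<and>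
          (E x y \<noteq> (\<exists>A B. (A, B) \<in> F \<and> x \<in> A \<and> y \<in> B)))"
    using flip unfolding is_flip_def by auto
  have finP: "finite P" using finite_elements[OF finV part] .
  have "\<exists>Q\<in>P. t \<le> card (A \<inter> Q)"
  proof (rule ccontr)
    assume "\<not> ?thesis"
    hence le: "card (A \<inter> Q) \<le> t - 1" if "Q \<in> P" for Q using that by force
    have "A = (\<Union>Q\<in>P. A \<inter> Q)" using AU UV partition_onD1[OF part] by auto
    hence "card A \<le> (\<Sum>Q\<in>P. card (A \<inter> Q))" using card_UN_le[OF finP, of "\<lambda>Q. A \<inter> Q"] by simp
    also have "\<dots> \<le> card P * (t - 1)" using sum_bounded_above[of P "\<lambda>Q. card (A \<inter> Q)" "t-1"] le by simp
    also have "\<dots> \<le> k * (t-1)" using cP by simp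
    finally show False using mA m by (simp add: mult.commute)
  qed
  then obtain Q where QP: "Q \<in> P" and tQ: "t \<le> card (A \<inter> Q)" by blast
  obtain A0 where A0sub: "A0 \<subseteq> A \<inter> Q" and cA0: "card A0 = t"
    using obtain_subset_with_card_n[OF tQ] by blast
  define W where "W = {y. \<exists>Q'. (Q,Q') \<in> F \<and> y \<in> Q'}"
  have flipQ: "(\<exists>A' B'. (A', B') \<in> F \<and> a \<in> A' \<and> y \<in> B') \<longleftrightarrow> y \<in> W" if "a \<in> Q" for a y
  proof
    assume "\<exists>A' B'. (A', B') \<in> F \<and> a \<in> A' \<and> y \<in> B'"
    then obtain A' B' where "(A', B') \<in> F" "a \<in> A'" "y \<in> B'" by blast
    moreover have "A' = Q" using part_eq[OF part _ QP] calculation FP that by blast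
    ultimately show "y \<in> W" unfolding W_def by blast
  qed (use that W_def in blast)
  have adjQ: "snd H' a y \<longleftrightarrow> (y \<in> V \<and> a \<noteq> y \<and> (E a y \<noteq> (y \<in> W)))" if "a \<in> A0" for a y
  proof -
    have aQ: "a \<in> Q" and aV: "a \<in> V" using that A0sub AU UV by auto
    have "snd H' a y \<longleftrightarrow> (a \<in> V \<and> y \<in> V \<and> a \<noteq> y \<and> (E a y \<noteq> (\<exists>A B. (A, B) \<in> F \<and> a \<in> A \<and> y \<in> B)))"
      using adj by blast
    also have "\<dots> \<longleftrightarrow> (y \<in> V \<and> a \<noteq> y \<and> (E a y \<noteq> (y \<in> W)))" using flipQ[OF aQ, of y] aV by simp
    finally show ?thesis .
  qed
  have s1: "card {w\<in>U. E a w \<and> w \<notin> W} < m" if "a \<in> A0" for a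
  proof -
    have "card {w\<in>U. E a w \<and> w \<notin> W} \<le> card {w\<in>U. snd H' a w}"
      using adjQ[OF that] finU inV UV by (intro card_mono) auto
    thus ?thesis using bad that A0sub by fastforce
  qed
  have s2: "card {w\<in>U \<inter> W. \<not> E a w \<and> w \<noteq> a} < m" if "a \<in> A0" for a
  proof -
    have "card {w\<in>U \<inter> W. \<not> E a w \<and> w \<noteq> a} \<le> card {w\<in>U. snd H' a w}"
      using adjQ[OF that] finU UV by (intro card_mono) auto
    thus ?thesis using bad that A0sub by fastforce
  qed
  obtain a1 where a1: "a1 \<in> A0" using cA0 t1 by (metis card.empty ex_in_conv not_one_le_zero)
  have "D \<le> card {w\<in>U. E a1 w}" using Udeg a1 A0sub AU by auto
  also have "\<dots> \<le> card ({w\<in>U. E a1 w \<and> w \<notin> W} \<union> (U \<inter> W))"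
    using finU by (intro card_mono) auto
  also have "\<dots> \<le> card {w\<in>U. E a1 w \<and> w \<notin> W} + card (U \<inter> W)" by (rule card_Un_le)
  finally have UW: "D + 1 \<le> m + card (U \<inter> W)" using s1[OF a1] by linarith
  define C where "C = {w \<in> U \<inter> W. \<forall>a\<in>A0. E a w}"
  have finA0: "finite A0" using cA0 t1 card.infinite by force
  have "U \<inter> W \<subseteq> C \<union> (\<Union>a\<in>A0. insert a {w\<in>U \<inter> W. \<not> E a w \<and> w \<noteq> a})"
    unfolding C_def by auto
  hence "card (U \<inter> W) \<le> card (C \<union> (\<Union>a\<in>A0. insert a {w\<in>U \<inter> W. \<not> E a w \<and> w \<noteq> a}))"
    using finU finA0 unfolding C_def by (intro card_mono) auto
  also have "\<dots> \<le> card C + card (\<Union>a\<in>A0. insert a {w\<in>U \<inter> W. \<not> E a w \<and> w \<noteq> a})"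
    by (rule card_Un_le)
  also have "card (\<Union>a\<in>A0. insert a {w\<in>U \<inter> W. \<not> E a w \<and> w \<noteq> a})
      \<le> (\<Sum>a\<in>A0. card (insert a {w\<in>U \<inter> W. \<not> E a w \<and> w \<noteq> a}))"
    by (rule card_UN_le) (use cA0 t1 card.infinite in fastforce)
  also have "\<dots> \<le> card A0 * m"
  proof -
    have "card (insert a {w\<in>U \<inter> W. \<not> E a w \<and> w \<noteq> a}) \<le> m" if "a \<in> A0" for a
    proof -
      have "card (insert a {w\<in>U \<inter> W. \<not> E a w \<and> w \<noteq> a}) \<le> Suc (card {w\<in>U \<inter> W. \<not> E a w \<and> w \<noteq> a})"
        using finU by (simp add: card_insert_if)
      thus ?thesis using s2[OF that] by linarith
    qed
    thus ?thesis using sum_bounded_above[of A0 _ m] by simp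
  qed
  finally have CW: "card (U \<inter> W) \<le> card C + t * m" using cA0 by simp
  obtain t' where t: "t = Suc t'" using t1 by (cases t) auto
  have e1: "m = t'*k + 1" using m t by simp
  have e2: "t*t*k + 2*t = t'*t'*k + 2*(t'*k) + k + 2*t' + 2" using t by (simp add: algebra_simps)
  have e3: "t*m = t'*t'*k + t'*k + t' + 1" using t e1 by (simp add: algebra_simps)
  have "t \<le> card C" using UW CW Dbig e1 e2 e3 t by linarith
  then obtain B0 where B0sub: "B0 \<subseteq> C" and cB0: "card B0 = t"
    using obtain_subset_with_card_n by blast
  have c1: "A0 \<subseteq> V" using A0sub AU UV by auto
  have c2: "B0 \<subseteq> V" using B0sub UV unfolding C_def by auto
  have c6: "\<forall>a\<in>A0. \<forall>b\<in>B0. E a b" using B0sub unfolding C_def by auto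
  have c3: "A0 \<inter> B0 = {}" using c6 inV by blast
  have "contains_Ktt (V,E) t"
    unfolding contains_Ktt_def using c1 c2 c3 cA0 cB0 c6
    by (intro exI[of _ A0] exI[of _ B0]) simp
  thus False using nk by simp
qed



lemma runner_invariant:
  assumes fg: "fin_graph (V,E)" and nk: "\<not> contains_Ktt (V,E) t"
    and UV: "U \<subseteq> V" and Udeg: "\<forall>u\<in>U. D \<le> card {w\<in>U. E u w}"
    and m: "m = (t-1)*k + 1"
    and Dbig: "t*t*k + 2*t \<le> D + k" and t1: "1 \<le> t"
  shows "flipper_wins (V,E) k H v \<Longrightarrow> v \<in> U \<Longrightarrow> m \<le> card {w\<in>U. snd H v w} \<Longrightarrow> False"
proof (induction rule: flipper_wins.induct)
  case (step H' v H)
  obtain a where aA: "a \<in> {w\<in>U. snd H v w}" and ma: "m \<le> card {w\<in>U. snd H' a w}"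
    using runner_step[OF fg nk step.hyps(1) UV Udeg _ step.prems(2) m Dbig t1] by blast
  have "1 \<le> card {w\<in>U. snd H' a w}" using ma m by simp
  hence "{w\<in>U. snd H' a w} \<noteq> {}" by (metis card.empty not_one_le_zero)
  hence ni: "\<not> isolated H' a" unfolding isolated_def by auto
  have "isolated H' a \<or> (flipper_wins (V,E) k H' a \<and> (a \<in> U \<longrightarrow> m \<le> card {w\<in>U. snd H' a w} \<longrightarrow> False))"
    using step.IH aA by blast
  thus False using ni aA ma by blast
qed

lemma lower:
  assumes fg: "fin_graph (V,E)" and nk: "\<not> contains_Ktt (V,E) t" and Vne: "V \<noteq> {}"
    and win: "flipper_has_winning_strategy (V,E) k"
  shows "degeneracy (V,E) < 2*t^2*k"
proof (rule ccontr)
  define D where "D = degeneracy (V,E)"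
  assume "\<not> degeneracy (V,E) < 2*t^2*k"
  hence Dge: "2*t^2*k \<le> D" unfolding D_def by simp
  have finV: "finite V" using fg by (simp add: fin_graph_def)
  have t1: "1 \<le> t" using nk Ktt0[of "(V,E)"] by (cases t) auto
  obtain v0 where v0: "v0 \<in> V" using Vne by auto
  have k1: "1 \<le> k"
  proof (rule ccontr)
    assume "\<not> 1 \<le> k"
    hence k0: "k = 0" by simp
    have "flipper_wins (V,E) k (V,E) v0" using win v0 unfolding flipper_has_winning_strategy_def by auto
    then obtain H' where "is_flip k (V,E) H'" by (cases rule: flipper_wins.cases) auto
    then obtain P where part: "partition_on V P" and cP: "card P \<le> 0" using k0 unfolding is_flip_def by auto
    have "finite P" using finite_elements[OF finV part] .
    hence "P = {}" using cP by simp
    thus False using partition_onD1[OF part] Vne by simp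
  qed
  obtain t' where t: "t = Suc t'" using t1 by (cases t) auto
  have sq: "2*t \<le> t*t + 1" using t by (simp add: algebra_simps)
  have "(t*t+1)*1 \<le> (t*t+1)*k" using k1 by (rule mult_left_mono) simp
  hence "2*t \<le> (t*t+1)*k" using sq by simp
  hence "t*t*k + 2*t \<le> t*t*k + (t*t+1)*k" by (rule add_left_mono)
  also have "\<dots> = 2*t^2*k + k" by (simp add: algebra_simps power2_eq_square)
  finally have Dbig: "t*t*k + 2*t \<le> D + k" using Dge by linarith
  have "0 < 2*t^2*k" using t1 k1 by simp
  hence D1: "1 \<le> D" using Dge by linarith
  obtain U where UV: "U \<subseteq> V" and Une: "U \<noteq> {}" and Udeg: "\<forall>u\<in>U. D \<le> card {w\<in>U. E u w}"
    using min_deg_sub[OF fg] D1 unfolding D_def by blast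
  define m where "m = (t-1)*k + 1"
  obtain u0 where u0: "u0 \<in> U" using Une by auto
  have e1: "m = t'*k + 1" using m_def t by simp
  have e2: "t*t*k + 2*t = t'*t'*k + 2*(t'*k) + k + 2*t' + 2" using t by (simp add: algebra_simps)
  have "m \<le> D" using Dbig e1 e2 by linarith
  also have "D \<le> card {w\<in>U. E u0 w}" using Udeg u0 by auto
  finally have mu: "m \<le> card {w\<in>U. snd (V,E) u0 w}" by simp
  have "flipper_wins (V,E) k (V,E) u0" using win u0 UV unfolding flipper_has_winning_strategy_def by auto
  thus False using runner_invariant[OF fg nk UV Udeg m_def Dbig t1] u0 mu by blast
qed

theorem mainTheorem7:
  shows "(\<forall>(G :: 'a graph) (t :: nat). fin_graph G \<and> fst G \<noteq> {} \<and> \<not> contains_Ktt G t \<longrightarrow>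
            real (degeneracy G) / (2 * real t ^ 2) < real (fw1 G) \<and>
            fw1 G \<le> (degeneracy G + 1) ^ t)
       \<and> (\<forall>C :: 'a graph set. (\<forall>G \<in> C. fin_graph G) \<and> weakly_sparse C \<longrightarrow>
            ((\<exists>k. \<forall>G \<in> C. fw1 G \<le> k) \<longleftrightarrow> (\<exists>d. \<forall>G \<in> C. degeneracy G \<le> d)))"
proof -
  have P1: "real (degeneracy G) / (2 * real t ^ 2) < real (fw1 G) \<and> fw1 G \<le> (degeneracy G + 1) ^ t"
    if h: "fin_graph G" "fst G \<noteq> {}" "\<not> contains_Ktt G t" for G :: "'a graph" and t
  proof -
    obtain V E where G: "G = (V,E)" by (cases G)
    have up: "flipper_has_winning_strategy G ((degeneracy G + 1)^t)"
      using upper_wins[of V E t] h G by simp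
    hence le: "fw1 G \<le> (degeneracy G + 1) ^ t" unfolding fw1_def by (rule Least_le)
    have win: "flipper_has_winning_strategy G (fw1 G)" unfolding fw1_def using up by (rule LeastI)
    have lt: "degeneracy G < 2*t^2*fw1 G" using lower[of V E t "fw1 G"] h G win by simp
    have t1: "1 \<le> t" using h(3) Ktt0[of G] by (cases t) auto
    have pos: "0 < 2 * real t ^ 2" using t1 by simp
    have "real (degeneracy G) < real (fw1 G) * (2 * real t ^ 2)"
    proof -
      have "real (degeneracy G) < real (2*t^2*fw1 G)" using lt by linarith
      thus ?thesis by (simp add: algebra_simps)
    qed
    hence "real (degeneracy G) / (2 * real t ^ 2) < real (fw1 G)"
      using pos by (simp add: pos_divide_less_eq)
    thus ?thesis using le by simp
  qed
  have empty_fw: "fw1 G = 0" if "fst G = {}" for G :: "'a graph"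
  proof -
    have "flipper_has_winning_strategy G 0" unfolding flipper_has_winning_strategy_def using that by simp
    hence "fw1 G \<le> 0" unfolding fw1_def by (rule Least_le)
    thus ?thesis by simp
  qed
  have empty_deg: "degeneracy G = 0" if "fst G = {}" for G :: "'a graph"
  proof -
    obtain V E where G: "G = (V,E)" by (cases G)
    have "degeneracy (V,E) \<le> 0" using that G by (intro deg_le[of "\<lambda>_. 0::nat"]) auto
    thus ?thesis using G by simp
  qed
  have P2: "(\<exists>k. \<forall>G \<in> C. fw1 G \<le> k) \<longleftrightarrow> (\<exists>d. \<forall>G \<in> C. degeneracy G \<le> d)"
    if fin: "\<forall>G \<in> C. fin_graph G" and ws: "weakly_sparse C" for C :: "'a graph set"
  proof -
    obtain t where nt: "\<forall>G\<in>C. \<not> contains_Ktt G t" using ws unfolding weakly_sparse_def by blast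
    show ?thesis
    proof
      assume "\<exists>k. \<forall>G \<in> C. fw1 G \<le> k"
      then obtain k where k: "\<forall>G \<in> C. fw1 G \<le> k" by blast
      have "degeneracy G \<le> 2*t^2*k" if G: "G \<in> C" for G
      proof (cases "fst G = {}")
        case True
        then show ?thesis using empty_deg by simp
      next
        case False
        obtain V E where GVE: "G = (V,E)" by (cases G)
        have up: "flipper_has_winning_strategy G ((degeneracy G + 1)^t)"
          using upper_wins[of V E t] fin nt G GVE by simp
        have win: "flipper_has_winning_strategy G (fw1 G)" unfolding fw1_def using up by (rule LeastI)
        have "degeneracy G < 2*t^2*fw1 G" using lower[of V E t "fw1 G"] fin nt G GVE win False by simp
        also have "\<dots> \<le> 2*t^2*k" using k G by simp
        finally show ?thesis by simp
      qed
      thus "\<exists>d. \<forall>G \<in> C. degeneracy G \<le> d" by blast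
    next
      assume "\<exists>d. \<forall>G \<in> C. degeneracy G \<le> d"
      then obtain d where d: "\<forall>G \<in> C. degeneracy G \<le> d" by blast
      have "fw1 G \<le> (d+1)^t" if G: "G \<in> C" for G
      proof (cases "fst G = {}")
        case True
        then show ?thesis using empty_fw by simp
      next
        case False
        obtain V E where GVE: "G = (V,E)" by (cases G)
        have up: "flipper_has_winning_strategy G ((degeneracy G + 1)^t)"
          using upper_wins[of V E t] fin nt G GVE by simp
        hence "fw1 G \<le> (degeneracy G + 1)^t" unfolding fw1_def by (rule Least_le)
        also have "\<dots> \<le> (d+1)^t" using d G by (simp add: power_mono)
        finally show ?thesis .
      qed
      thus "\<exists>k. \<forall>G \<in> C. fw1 G \<le> k" by blast
    qed
  qed
  show ?thesis using P1 P2 by blast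
qed

end
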